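(* Consider the system \[ \begin{aligned} \dot X_1^1&=\bigl(\mu_1(S_1^{in}-k_1X_1^1)-D_1\bigr)X_1^1,\\ \dot X_2^1&=\bigl(\mu_2(S_2^{in}+k_2X_1^1-k_3X_2^1)-D_1\bigr)X_2^1,\\ \dot X_1^2&=D_2(X_1^1-X_1^2)+\mu_1(S_1^{in}-k_1X_1^2)X_1^2,\\ \dot X_2^2&=D_2(X_2^1-X_2^2)+\mu_2(S_2^{in}+k_2X_1^2-k_3X_2^2)X_2^2, \end{aligned} \] on $M=\{(X_1^1,X_2^1,X_1^2,X_2^2)\in\mathbb R_+^4: X_1^i\le S_1^{in}/k_1,\ X_2^i\le (S_2^{in}+k_2X_1^i)/k_3,\ i=1,2\}$, where $\mu_1,\mu_2$ satisfy (H1) and (H2). Then its nonnegative steady states are of the following nine types, with the indicated components (for $i=1,2$), and a steady state of each type exists (with nonnegative components) if and only if the indicated condition holds: \begin{itemize} \item $\mathcal E_{00}^{00}=(0,0,0,0)$: always exists. \item $\mathcal E_{00}^{0i}=\bigl(0,0,0,(S_2^{in}-\lambda_2^{2i})/k_3\bigr)$: exists iff $S_2^{in}>\lambda_2^{2i}$. \item $\mathcal E_{00}^{10}=\bigl(0,0,(S_1^{in}-\lambda_1^2)/k_1,0\bigr)$: exists iff $S_1^{in}>\lambda_1^2$. \item $\mathcal E_{00}^{1i}=\bigl(0,0,(S_1^{in}-\lambda_1^2)/k_1,\ k_2(S_1^{in}-F_{2i})/(k_1k_3)\bigr)$: exists iff $S_1^{in}>\max(\lambda_1^2,F_{2i})$.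 \item $\mathcal E_{10}^{10}=\bigl((S_1^{in}-\lambda_1^1)/k_1,0,X_1^{2*},0\bigr)$, where $X_1^{2*}$ is the unique solution of $f_1(x)=g_1(x)$ (with $X_1^{1*}=(S_1^{in}-\lambda_1^1)/k_1$): exists iff $S_1^{in}>\lambda_1^1$. \item $\mathcal E_{10}^{1i}=\bigl((S_1^{in}-\lambda_1^1)/k_1,0,X_1^{2*},\phi_i/k_3\bigr)$, with $X_1^{2*}$ as in the previous item: exists iff $S_1^{in}>\lambda_1^1$ and $\phi_i>0$. \item $\mathcal E_{0i}^{01}=\bigl(0,(S_2^{in}-\lambda_2^{1i})/k_3,0,X_2^{2*}\bigr)$, where $X_2^{2*}$ is a solution of $f_2(x)=g_2(x)$ with $X_2^{1*}=(S_2^{in}-\lambda_2^{1i})/k_3$: exists iff $S_2^{in}>\lambda_2^{1i}$. \item $\mathcal E_{0i}^{11}=\bigl(0,(S_2^{in}-\lambda_2^{1i})/k_3,(S_1^{in}-\lambda_1^2)/k_1,X_2^{2*}\bigr)$, where $X_2^{2*}$ is a solution of $f_3(x)=g_2(x)$ with $X_2^{1*}=(S_2^{in}-\lambda_2^{1i})/k_3$ and $X_1^{2*}=(S_1^{in}-\lambda_1^2)/k_1$: exists iff $S_1^{in}>\lambda_1^2$ and $S_2^{in}>\lambda_2^{1i}$. \item $\mathcal E_{1i}^{11}=\bigl((S_1^{in}-\lambda_1^1)/k_1,\ k_2(S_1^{in}-F_{1i})/(k_1k_3),\ X_1^{2*},X_2^{2*}\bigr)$, where $X_1^{2*}$ is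 the unique solution of $f_1(x)=g_1(x)$ (with $X_1^{1*}=(S_1^{in}-\lambda_1^1)/k_1$) and $X_2^{2*}$ is a solution of $f_3(x)=g_2(x)$ (with $X_2^{1*}=k_2(S_1^{in}-F_{1i})/(k_1k_3)$): exists iff $S_1^{in}>\max(\lambda_1^1,F_{1i})$. \end{itemize}
   Context: Parameters: $k_1,k_2,k_3>0$ (pseudo-stoichiometric coefficients), $D>0$, $r\in(0,1)$, $r_1=r$, $r_2=1-r$, $D_1=D/r_1$, $D_2=D/r_2$, $S_1^{in},S_2^{in}\ge0$. The functions $\mu_1,\mu_2\in C^1(\mathbb R_+)$ satisfy (H1): $\mu_1(0)=0$, $\lim_{s\to\infty}\mu_1(s)=m_1$, $\mu_1'(s)>0$ for all $s>0$; and (H2): $\mu_2(0)=0$, $\lim_{s\to\infty}\mu_2(s)=0$, and there is $S_2^m>0$ with $\mu_2'>0$ on $(0,S_2^m)$ and $\mu_2'<0$ on $(S_2^m,\infty)$. Let $D_i^m=r_i\mu_2(S_2^m)$. For $i=1,2$: $\lambda_1^i=\lambda_1^i(D,r)$ is the unique solution of $\mu_1(S)=D_i$ when $D<r_im_1$, and $\lambda_1^i=+\infty$ otherwise; $\lambda_2^{i1}\le\lambda_2^{i2}$ are the solutions of $\mu_2(S)=D_i$ when $D\le D_i^m$, and $\lambda_2^{ij}=+\infty$ otherwise. $F_{ij}=\lambda_1^i+\frac{k_1}{k_2}(\lambda_2^{ij}-S_2^{in})$. $\phi_j=S_2^{in}+k_2X_1^{2*}-\lambda_2^{2j}$, where $X_1^{2*}$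 is the unique solution of $f_1(x)=g_1(x)$ with $X_1^{1*}=(S_1^{in}-\lambda_1^1)/k_1$ (defined for $0<D\le D_2^m$, $S_1^{in}>\lambda_1^1$). Auxiliary functions (where $X_1^{1*},X_2^{1*},X_1^{2*}$ denote the indicated components of the steady state under consideration): $g_1(x)=D_2(x-X_1^{1*})/x$, $g_2(x)=D_2(x-X_2^{1*})/x$ on $(0,\infty)$; $f_1(x)=\mu_1(S_1^{in}-k_1x)$ on $[0,S_1^{in}/k_1]$; $f_2(x)=\mu_2(S_2^{in}-k_3x)$ on $[0,S_2^{in}/k_3]$; $f_3(x)=\mu_2(S_2^{in}+k_2X_1^{2*}-k_3x)$ on $[0,(S_2^{in}+k_2X_1^{2*})/k_3]$. Notation $\mathcal E_{ab}^{cd}$: the subscript refers to $(X_1^1,X_2^1)$ and the superscript to $(X_1^2,X_2^2)$; $0$ means the component vanishes, a nonzero index means it is positive (the index $i\in\{1,2\}$ distinguishing the two possible branches). *)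

theory Defs
  imports Complex_Main "HOL-Library.Extended_Real"
begin

text \<open>The possibly infinite
  quantities lambda, F, phi are extended reals; lambda = \<infinity> encodes "no solution".\<close>

definition rr :: "real \<Rightarrow> nat \<Rightarrow> real" where
  "rr r i = (if i = 1 then r else 1 - r)"

definition Dd :: "real \<Rightarrow> real \<Rightarrow> nat \<Rightarrow> real" where
  "Dd D r i = D / rr r i"

definition lam1 :: "(real \<Rightarrow> real) \<Rightarrow> real \<Rightarrow> real \<Rightarrow> real \<Rightarrow> nat \<Rightarrow> ereal" where
  "lam1 mu1 m1 D r i =
     (if D < rr r i * m1 then ereal (THE s. 0 \<le> s \<and> mu1 s = Dd D r i) else \<infinity>)"

text \<open>lam2 ... i 1 = lambda_2^{i1} (the smaller root), lam2 ... i 2 = lambda_2^{i2}.\<close>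
definition lam2 :: "(real \<Rightarrow> real) \<Rightarrow> real \<Rightarrow> real \<Rightarrow> real \<Rightarrow> nat \<Rightarrow> nat \<Rightarrow> ereal" where
  "lam2 mu2 S2m D r i j =
     (if D \<le> rr r i * mu2 S2m
      then ereal (if j = 1 then (THE s. 0 \<le> s \<and> s \<le> S2m \<and> mu2 s = Dd D r i)
                  else (THE s. S2m \<le> s \<and> mu2 s = Dd D r i))
      else \<infinity>)"

definition FF :: "real \<Rightarrow> real \<Rightarrow> real \<Rightarrow> real \<Rightarrow> real \<Rightarrow> (real \<Rightarrow> real) \<Rightarrow> (real \<Rightarrow> real)
    \<Rightarrow> real \<Rightarrow> real \<Rightarrow> nat \<Rightarrow> nat \<Rightarrow> ereal" where
  "FF k1 k2 D r S2in mu1 mu2 m1 S2m i j =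
     lam1 mu1 m1 D r i + ereal (k1 / k2) * (lam2 mu2 S2m D r i j - ereal S2in)"

definition X11s :: "real \<Rightarrow> real \<Rightarrow> real \<Rightarrow> real \<Rightarrow> (real \<Rightarrow> real) \<Rightarrow> real \<Rightarrow> real" where
  "X11s k1 D r S1in mu1 m1 = (S1in - real_of_ereal (lam1 mu1 m1 D r 1)) / k1"

text \<open>X_1^{2*}: the unique solution of f1(x) = g1(x), x in (0, S1in/k1]
  (domain of g1 is (0,\<infinity>), of f1 is [0,S1in/k1]).\<close>
definition X12s :: "real \<Rightarrow> real \<Rightarrow> real \<Rightarrow> real \<Rightarrow> (real \<Rightarrow> real) \<Rightarrow> real \<Rightarrow> real" where
  "X12s k1 D r S1in mu1 m1 =
     (THE x. 0 < x \<and> x \<le> S1in / k1 \<and>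
        mu1 (S1in - k1 * x) = Dd D r 2 * (x - X11s k1 D r S1in mu1 m1) / x)"

definition phi :: "real \<Rightarrow> real \<Rightarrow> real \<Rightarrow> real \<Rightarrow> real \<Rightarrow> real \<Rightarrow> (real \<Rightarrow> real)
    \<Rightarrow> (real \<Rightarrow> real) \<Rightarrow> real \<Rightarrow> real \<Rightarrow> nat \<Rightarrow> ereal" where
  "phi k1 k2 D r S1in S2in mu1 mu2 m1 S2m j =
     ereal (S2in + k2 * X12s k1 D r S1in mu1 m1) - lam2 mu2 S2m D r 2 j"

text \<open>The invariant set M; a state is (X_1^1, X_2^1, X_1^2, X_2^2) = (a, b, c, d).\<close>
definition inM :: "real \<Rightarrow> real \<Rightarrow> real \<Rightarrow> real \<Rightarrow> real
    \<Rightarrow> real \<Rightarrow> real \<Rightarrow> real \<Rightarrow> real \<Rightarrow> bool" where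
  "inM k1 k2 k3 S1in S2in a b c d \<longleftrightarrow>
     0 \<le> a \<and> 0 \<le> b \<and> 0 \<le> c \<and> 0 \<le> d \<and>
     a \<le> S1in / k1 \<and> c \<le> S1in / k1 \<and>
     b \<le> (S2in + k2 * a) / k3 \<and> d \<le> (S2in + k2 * c) / k3"

definition steady :: "real \<Rightarrow> real \<Rightarrow> real \<Rightarrow> real \<Rightarrow> real \<Rightarrow> real \<Rightarrow> real
    \<Rightarrow> (real \<Rightarrow> real) \<Rightarrow> (real \<Rightarrow> real) \<Rightarrow> real \<Rightarrow> real \<Rightarrow> real \<Rightarrow> real \<Rightarrow> bool" where
  "steady k1 k2 k3 D r S1in S2in mu1 mu2 a b c d \<longleftrightarrow>
     inM k1 k2 k3 S1in S2in a b c d \<and>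
     (mu1 (S1in - k1 * a) - Dd D r 1) * a = 0 \<and>
     (mu2 (S2in + k2 * a - k3 * b) - Dd D r 1) * b = 0 \<and>
     Dd D r 2 * (a - c) + mu1 (S1in - k1 * c) * c = 0 \<and>
     Dd D r 2 * (b - d) + mu2 (S2in + k2 * c - k3 * d) * d = 0"

datatype sstype =
    E00_00 | E00_0i nat | E00_10 | E00_1i nat | E10_10 | E10_1i nat
  | E0i_01 nat | E0i_11 nat | E1i_11 nat

definition all_types :: "sstype set" where
  "all_types = {E00_00, E00_10, E10_10} \<union>
     (\<Union>i\<in>{1::nat,2}. {E00_0i i, E00_1i i, E10_1i i, E0i_01 i, E0i_11 i, E1i_11 i})"

fun is_type :: "real \<Rightarrow> real \<Rightarrow> real \<Rightarrow> real \<Rightarrow> real \<Rightarrow> real \<Rightarrow> real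
    \<Rightarrow> (real \<Rightarrow> real) \<Rightarrow> (real \<Rightarrow> real) \<Rightarrow> real \<Rightarrow> real
    \<Rightarrow> sstype \<Rightarrow> real \<Rightarrow> real \<Rightarrow> real \<Rightarrow> real \<Rightarrow> bool" where
  "is_type k1 k2 k3 D r S1in S2in mu1 mu2 m1 S2m E00_00 a b c d \<longleftrightarrow>
     a = 0 \<and> b = 0 \<and> c = 0 \<and> d = 0"
| "is_type k1 k2 k3 D r S1in S2in mu1 mu2 m1 S2m (E00_0i i) a b c d \<longleftrightarrow>
     a = 0 \<and> b = 0 \<and> c = 0 \<and> d > 0 \<and>
     lam2 mu2 S2m D r 2 i \<noteq> \<infinity> \<and>
     d = (S2in - real_of_ereal (lam2 mu2 S2m D r 2 i)) / k3"
| "is_type k1 k2 k3 D r S1in S2in mu1 mu2 m1 S2m E00_10 a b c d \<longleftrightarrow>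
     a = 0 \<and> b = 0 \<and> c > 0 \<and> d = 0 \<and>
     lam1 mu1 m1 D r 2 \<noteq> \<infinity> \<and>
     c = (S1in - real_of_ereal (lam1 mu1 m1 D r 2)) / k1"
| "is_type k1 k2 k3 D r S1in S2in mu1 mu2 m1 S2m (E00_1i i) a b c d \<longleftrightarrow>
     a = 0 \<and> b = 0 \<and> c > 0 \<and> d > 0 \<and>
     lam1 mu1 m1 D r 2 \<noteq> \<infinity> \<and> FF k1 k2 D r S2in mu1 mu2 m1 S2m 2 i \<noteq> \<infinity> \<and>
     c = (S1in - real_of_ereal (lam1 mu1 m1 D r 2)) / k1 \<and>
     d = k2 * (S1in - real_of_ereal (FF k1 k2 D r S2in mu1 mu2 m1 S2m 2 i)) / (k1 * k3)"
| "is_type k1 k2 k3 D r S1in S2in mu1 mu2 m1 S2m E10_10 a b c d \<longleftrightarrow>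
     a > 0 \<and> b = 0 \<and> c > 0 \<and> d = 0 \<and>
     lam1 mu1 m1 D r 1 \<noteq> \<infinity> \<and>
     a = X11s k1 D r S1in mu1 m1 \<and> c = X12s k1 D r S1in mu1 m1"
| "is_type k1 k2 k3 D r S1in S2in mu1 mu2 m1 S2m (E10_1i i) a b c d \<longleftrightarrow>
     a > 0 \<and> b = 0 \<and> c > 0 \<and> d > 0 \<and>
     lam1 mu1 m1 D r 1 \<noteq> \<infinity> \<and> lam2 mu2 S2m D r 2 i \<noteq> \<infinity> \<and>
     a = X11s k1 D r S1in mu1 m1 \<and> c = X12s k1 D r S1in mu1 m1 \<and>
     d = real_of_ereal (phi k1 k2 D r S1in S2in mu1 mu2 m1 S2m i) / k3"
| "is_type k1 k2 k3 D r S1in S2in mu1 mu2 m1 S2m (E0i_01 i) a b c d \<longleftrightarrow>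
     a = 0 \<and> b > 0 \<and> c = 0 \<and> d > 0 \<and>
     lam2 mu2 S2m D r 1 i \<noteq> \<infinity> \<and>
     b = (S2in - real_of_ereal (lam2 mu2 S2m D r 1 i)) / k3 \<and>
     d \<le> S2in / k3 \<and> mu2 (S2in - k3 * d) = Dd D r 2 * (d - b) / d"
| "is_type k1 k2 k3 D r S1in S2in mu1 mu2 m1 S2m (E0i_11 i) a b c d \<longleftrightarrow>
     a = 0 \<and> b > 0 \<and> c > 0 \<and> d > 0 \<and>
     lam2 mu2 S2m D r 1 i \<noteq> \<infinity> \<and> lam1 mu1 m1 D r 2 \<noteq> \<infinity> \<and>
     b = (S2in - real_of_ereal (lam2 mu2 S2m D r 1 i)) / k3 \<and>
     c = (S1in - real_of_ereal (lam1 mu1 m1 D r 2)) / k1 \<and>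
     d \<le> (S2in + k2 * c) / k3 \<and> mu2 (S2in + k2 * c - k3 * d) = Dd D r 2 * (d - b) / d"
| "is_type k1 k2 k3 D r S1in S2in mu1 mu2 m1 S2m (E1i_11 i) a b c d \<longleftrightarrow>
     a > 0 \<and> b > 0 \<and> c > 0 \<and> d > 0 \<and>
     lam1 mu1 m1 D r 1 \<noteq> \<infinity> \<and> FF k1 k2 D r S2in mu1 mu2 m1 S2m 1 i \<noteq> \<infinity> \<and>
     a = X11s k1 D r S1in mu1 m1 \<and>
     b = k2 * (S1in - real_of_ereal (FF k1 k2 D r S2in mu1 mu2 m1 S2m 1 i)) / (k1 * k3) \<and>
     c = X12s k1 D r S1in mu1 m1 \<and>
     d \<le> (S2in + k2 * c) / k3 \<and> mu2 (S2in + k2 * c - k3 * d) = Dd D r 2 * (d - b) / d"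

fun exists_cond :: "real \<Rightarrow> real \<Rightarrow> real \<Rightarrow> real \<Rightarrow> real \<Rightarrow> real \<Rightarrow> real
    \<Rightarrow> (real \<Rightarrow> real) \<Rightarrow> (real \<Rightarrow> real) \<Rightarrow> real \<Rightarrow> real \<Rightarrow> sstype \<Rightarrow> bool" where
  "exists_cond k1 k2 k3 D r S1in S2in mu1 mu2 m1 S2m E00_00 \<longleftrightarrow> True"
| "exists_cond k1 k2 k3 D r S1in S2in mu1 mu2 m1 S2m (E00_0i i) \<longleftrightarrow>
     ereal S2in > lam2 mu2 S2m D r 2 i"
| "exists_cond k1 k2 k3 D r S1in S2in mu1 mu2 m1 S2m E00_10 \<longleftrightarrow>
     ereal S1in > lam1 mu1 m1 D r 2"
| "exists_cond k1 k2 k3 D r S1in S2in mu1 mu2 m1 S2m (E00_1i i) \<longleftrightarrow>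
     ereal S1in > max (lam1 mu1 m1 D r 2) (FF k1 k2 D r S2in mu1 mu2 m1 S2m 2 i)"
| "exists_cond k1 k2 k3 D r S1in S2in mu1 mu2 m1 S2m E10_10 \<longleftrightarrow>
     ereal S1in > lam1 mu1 m1 D r 1"
| "exists_cond k1 k2 k3 D r S1in S2in mu1 mu2 m1 S2m (E10_1i i) \<longleftrightarrow>
     ereal S1in > lam1 mu1 m1 D r 1 \<and> phi k1 k2 D r S1in S2in mu1 mu2 m1 S2m i > 0"
| "exists_cond k1 k2 k3 D r S1in S2in mu1 mu2 m1 S2m (E0i_01 i) \<longleftrightarrow>
     ereal S2in > lam2 mu2 S2m D r 1 i"
| "exists_cond k1 k2 k3 D r S1in S2in mu1 mu2 m1 S2m (E0i_11 i) \<longleftrightarrow>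
     ereal S1in > lam1 mu1 m1 D r 2 \<and> ereal S2in > lam2 mu2 S2m D r 1 i"
| "exists_cond k1 k2 k3 D r S1in S2in mu1 mu2 m1 S2m (E1i_11 i) \<longleftrightarrow>
     ereal S1in > max (lam1 mu1 m1 D r 1) (FF k1 k2 D r S2in mu1 mu2 m1 S2m 1 i)"

end

theory Submission
  imports Defs
begin

locale chemo =
  fixes k1 k2 k3 D r S1in S2in m1 S2m :: real
    and mu1 mu2 mu1' mu2' :: "real \<Rightarrow> real"
  assumes k_pos: "k1 > 0" "k2 > 0" "k3 > 0"
    and D_pos: "D > 0"
    and r_range: "0 < r" "r < 1"
    and Sin_nonneg: "S1in \<ge> 0" "S2in \<ge> 0"
    and mu1_C1: "\<And>s. s \<ge> 0 \<Longrightarrow> (mu1 has_real_derivative mu1' s) (at s within {0..})"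
                "continuous_on {0..} mu1'"
    and mu2_C1: "\<And>s. s \<ge> 0 \<Longrightarrow> (mu2 has_real_derivative mu2' s) (at s within {0..})"
                "continuous_on {0..} mu2'"
    and H1: "mu1 0 = 0" "(mu1 \<longlongrightarrow> m1) at_top" "\<And>s. s > 0 \<Longrightarrow> mu1' s > 0"
    and H2: "mu2 0 = 0" "(mu2 \<longlongrightarrow> 0) at_top" "S2m > 0"
            "\<And>s. 0 < s \<Longrightarrow> s < S2m \<Longrightarrow> mu2' s > 0"
            "\<And>s. S2m < s \<Longrightarrow> mu2' s < 0"
begin

lemma der_at:
  assumes "(f has_real_derivative f') (at s within {0..})" "s > 0"
  shows "(f has_real_derivative f') (at s)"
proof -
  have "(f has_real_derivative f') (at s within {0<..})"
    by (rule has_field_derivative_subset[OF assms(1)]) auto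
  moreover have "at s within {0<..} = at s" using assms(2) by (intro at_within_open) auto
  ultimately show ?thesis by simp
qed

lemma mu1_der: "s > 0 \<Longrightarrow> (mu1 has_real_derivative mu1' s) (at s)"
  by (rule der_at[OF mu1_C1(1)]) auto
lemma mu2_der: "s > 0 \<Longrightarrow> (mu2 has_real_derivative mu2' s) (at s)"
  by (rule der_at[OF mu2_C1(1)]) auto

lemma mu1_cont: "continuous_on {0..} mu1"
  unfolding continuous_on_eq_continuous_within
  using mu1_C1(1) DERIV_continuous by blast
lemma mu2_cont: "continuous_on {0..} mu2"
  unfolding continuous_on_eq_continuous_within
  using mu2_C1(1) DERIV_continuous by blast

lemma mu1_mono: assumes "0 \<le> x" "x < y" shows "mu1 x < mu1 y"
proof (rule DERIV_pos_imp_increasing_open[OF assms(2)])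
  fix t assume "x < t" "t < y"
  then show "\<exists>z. DERIV mu1 t :> z \<and> z > 0" using assms mu1_der H1(3) by force
next
  show "continuous_on {x..y} mu1" using mu1_cont by (rule continuous_on_subset) (use assms in auto)
qed

lemma mu2_mono: assumes "0 \<le> x" "x < y" "y \<le> S2m" shows "mu2 x < mu2 y"
proof (rule DERIV_pos_imp_increasing_open[OF assms(2)])
  fix t assume "x < t" "t < y"
  then show "\<exists>z. DERIV mu2 t :> z \<and> z > 0" using assms mu2_der H2(4) by force
next
  show "continuous_on {x..y} mu2" using mu2_cont by (rule continuous_on_subset) (use assms in auto)
qed

lemma mu2_anti: assumes "S2m \<le> x" "x < y" shows "mu2 x > mu2 y"
proof (rule DERIV_neg_imp_decreasing_open[OF assms(2)])
  fix t assume "x < t" "t < y"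
  then show "\<exists>z. DERIV mu2 t :> z \<and> z < 0" proof (intro exI conjI)
    show "DERIV mu2 t :> mu2' t" using assms H2(3) \<open>x < t\<close> by (intro mu2_der) auto
    show "mu2' t < 0" using assms \<open>x < t\<close> by (intro H2(5)) auto
  qed
next
  show "continuous_on {x..y} mu2" using mu2_cont by (rule continuous_on_subset) (use assms H2(3) in auto)
qed

lemma mu1_lt: assumes "0 \<le> s" shows "mu1 s < m1"
proof -
  have "mu1 (s+1) \<le> m1"
  proof (rule tendsto_lowerbound[OF H1(2)])
    show "\<forall>\<^sub>F x in at_top. mu1 (s + 1) \<le> mu1 x"
      using eventually_ge_at_top[of "s+1"] by eventually_elim (use assms mu1_mono in \<open>force simp: le_less\<close>)
  qed simp
  then show ?thesis using mu1_mono[of s "s+1"] assms by simp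
qed

lemma mu1_pos: assumes "0 < s" shows "mu1 s > 0"
  using mu1_mono[of 0 s] assms H1(1) by simp

lemma mu1_nonneg: assumes "0 \<le> s" shows "mu1 s \<ge> 0"
  using mu1_pos[of s] assms H1(1) by (cases "s = 0") auto

lemma mu2_pos: assumes "0 < s" shows "mu2 s > 0"
proof (cases "s \<le> S2m")
  case True then show ?thesis using mu2_mono[of 0 s] assms H2(1) by simp
next
  case False
  have "mu2 (s+1) \<ge> 0"
  proof (rule tendsto_upperbound[OF H2(2)])
    show "\<forall>\<^sub>F x in at_top. mu2 x \<le> mu2 (s + 1)"
      using eventually_ge_at_top[of "s+1"] by eventually_elim (use False mu2_anti in \<open>force simp: le_less\<close>)
  qed simp
  then show ?thesis using mu2_anti[of s "s+1"] False by simp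
qed

lemma mu2_le_max: assumes "0 \<le> s" shows "mu2 s \<le> mu2 S2m"
  using mu2_mono[of s S2m] mu2_anti[of S2m s] assms by (cases s S2m rule: linorder_cases) auto


lemma rr_pos: "rr r i > 0" using r_range by (simp add: rr_def)
lemma Dd_pos: "Dd D r i > 0" using rr_pos D_pos by (simp add: Dd_def)

lemma lam1_cond: "D < rr r i * m1 \<longleftrightarrow> Dd D r i < m1"
  using rr_pos[of i] by (simp add: Dd_def pos_divide_less_eq mult.commute)
lemma lam2_cond: "D \<le> rr r i * mu2 S2m \<longleftrightarrow> Dd D r i \<le> mu2 S2m"
  using rr_pos[of i] by (simp add: Dd_def pos_divide_le_eq mult.commute)

lemma mu1_uniq: "0 \<le> s \<Longrightarrow> 0 \<le> t \<Longrightarrow> mu1 s = mu1 t \<Longrightarrow> s = t"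
  using mu1_mono[of s t] mu1_mono[of t s] by (cases s t rule: linorder_cases) auto

lemma lam1_eq:
  assumes "0 \<le> s" "mu1 s = Dd D r i"
  shows "lam1 mu1 m1 D r i = ereal s"
proof -
  have "D < rr r i * m1" using lam1_cond mu1_lt[OF assms(1)] assms(2) by simp
  moreover have "(THE s. 0 \<le> s \<and> mu1 s = Dd D r i) = s"
    by (rule the1_equality) (use assms mu1_uniq in auto)
  ultimately show ?thesis by (simp add: lam1_def)
qed

lemma lam1_fin:
  assumes "lam1 mu1 m1 D r i \<noteq> \<infinity>"
  shows "\<exists>s. lam1 mu1 m1 D r i = ereal s \<and> s > 0 \<and> mu1 s = Dd D r i"
proof -
  have "D < rr r i * m1" using assms by (auto simp: lam1_def split: if_splits)
  then have lt: "Dd D r i < m1" using lam1_cond by simp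
  obtain T where T: "\<And>x. x \<ge> T \<Longrightarrow> Dd D r i < mu1 x"
    using order_tendstoD(1)[OF H1(2) lt] by (auto simp: eventually_at_top_linorder)
  define T' where "T' = max T 0"
  have "\<exists>x. 0 \<le> x \<and> x \<le> T' \<and> mu1 x = Dd D r i"
    by (rule IVT') (use T[of T'] H1(1) Dd_pos[of i] continuous_on_subset[OF mu1_cont] in \<open>auto simp: T'_def\<close>)
  then obtain s where s: "0 \<le> s" "mu1 s = Dd D r i" by auto
  have "s \<noteq> 0" using s H1(1) Dd_pos[of i] by auto
  then show ?thesis using lam1_eq[OF s] s by auto
qed

lemma lam2_eq1:
  assumes "0 \<le> s" "s \<le> S2m" "mu2 s = Dd D r i"
  shows "lam2 mu2 S2m D r i 1 = ereal s"
proof -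
  have "D \<le> rr r i * mu2 S2m" using lam2_cond mu2_le_max[OF assms(1)] assms(3) by simp
  moreover have "(THE s. 0 \<le> s \<and> s \<le> S2m \<and> mu2 s = Dd D r i) = s"
  proof (rule the1_equality)
    show "\<exists>!s. 0 \<le> s \<and> s \<le> S2m \<and> mu2 s = Dd D r i"
    proof (rule ex1I[of _ s])
      fix t assume "0 \<le> t \<and> t \<le> S2m \<and> mu2 t = Dd D r i"
      then show "t = s" using assms mu2_mono[of s t] mu2_mono[of t s] by (cases s t rule: linorder_cases) auto
    qed (use assms in auto)
  qed (use assms in auto)
  ultimately show ?thesis by (simp add: lam2_def)
qed

lemma lam2_eq2:
  assumes "S2m \<le> s" "mu2 s = Dd D r i" "j \<noteq> 1"
  shows "lam2 mu2 S2m D r i j = ereal s"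
proof -
  have "D \<le> rr r i * mu2 S2m" using lam2_cond mu2_le_max[of s] H2(3) assms by simp
  moreover have "(THE s. S2m \<le> s \<and> mu2 s = Dd D r i) = s"
  proof (rule the1_equality)
    show "\<exists>!s. S2m \<le> s \<and> mu2 s = Dd D r i"
    proof (rule ex1I[of _ s])
      fix t assume "S2m \<le> t \<and> mu2 t = Dd D r i"
      then show "t = s" using assms mu2_anti[of s t] mu2_anti[of t s] by (cases s t rule: linorder_cases) auto
    qed (use assms in auto)
  qed (use assms in auto)
  ultimately show ?thesis using assms(3) by (simp add: lam2_def)
qed

lemma lam2_eq:
  assumes "0 \<le> s" "mu2 s = Dd D r i"
  shows "\<exists>j\<in>{1,2}. lam2 mu2 S2m D r i j = ereal s"
proof (cases "s \<le> S2m")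
  case True then show ?thesis using lam2_eq1[OF assms(1) True assms(2)] by auto
next
  case False then show ?thesis using lam2_eq2[of s i 2] assms by auto
qed

lemma lam2_fin:
  assumes "lam2 mu2 S2m D r i j \<noteq> \<infinity>"
  shows "\<exists>s. lam2 mu2 S2m D r i j = ereal s \<and> s > 0 \<and> mu2 s = Dd D r i"
proof -
  have "D \<le> rr r i * mu2 S2m" using assms by (auto simp: lam2_def split: if_splits)
  then have le: "Dd D r i \<le> mu2 S2m" using lam2_cond by simp
  show ?thesis
  proof (cases "j = 1")
    case True
    have "\<exists>x. 0 \<le> x \<and> x \<le> S2m \<and> mu2 x = Dd D r i"
      by (rule IVT') (use le H2(1,3) Dd_pos[of i] continuous_on_subset[OF mu2_cont] in auto)
    then obtain s where s: "0 \<le> s" "s \<le> S2m" "mu2 s = Dd D r i" by auto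
    have "s \<noteq> 0" using s H2(1) Dd_pos[of i] by auto
    then show ?thesis using lam2_eq1[OF s] s True by auto
  next
    case False
    obtain T where T: "\<And>x. x \<ge> T \<Longrightarrow> mu2 x < Dd D r i"
      using order_tendstoD(2)[OF H2(2) Dd_pos[of i]] by (auto simp: eventually_at_top_linorder)
    define T' where "T' = max T S2m"
    have "\<exists>x. S2m \<le> x \<and> x \<le> T' \<and> mu2 x = Dd D r i"
      by (rule IVT2') (use T[of T'] le H2(3) continuous_on_subset[OF mu2_cont] in \<open>auto simp: T'_def\<close>)
    then obtain s where s: "S2m \<le> s" "mu2 s = Dd D r i" by auto
    then show ?thesis using lam2_eq2[OF s False] H2(3) by auto
  qed
qed


lemma root_exists:
  fixes f :: "real \<Rightarrow> real"
  assumes "continuous_on {0..T} f" "f T = 0" "0 < b" "b < T" "K > 0"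
  shows "\<exists>x. 0 < x \<and> x \<le> T \<and> f x = K * (x - b) / x"
proof -
  have "continuous_on {0..T} (\<lambda>x. x * f x - K * (x - b))"
    by (intro continuous_intros assms(1))
  then have "\<exists>x. 0 \<le> x \<and> x \<le> T \<and> x * f x - K * (x - b) = 0"
    by (intro IVT2') (use assms in auto)
  then obtain x where x: "0 \<le> x" "x \<le> T" "x * f x - K * (x - b) = 0" by auto
  have "x \<noteq> 0" using x assms by auto
  then have "f x = K * (x - b) / x" using x by (simp add: field_simps)
  moreover have "0 < x" using x \<open>x \<noteq> 0\<close> by auto
  ultimately show ?thesis using x by blast
qed


abbreviation PX where
  "PX a x \<equiv> 0 < x \<and> x \<le> S1in / k1 \<and> mu1 (S1in - k1 * x) = Dd D r 2 * (x - a) / x"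

lemma g_strict:
  fixes a x y K :: real
  assumes "0 < a" "0 < x" "x < y" "K > 0"
  shows "K * (x - a) / x < K * (y - a) / y"
proof -
  have "a / y < a / x" using assms mult_strict_left_mono[of x y a] by (simp add: field_simps)
  then have "K * (1 - a / x) < K * (1 - a / y)" using assms by simp
  moreover have "K * (x - a) / x = K * (1 - a / x)" "K * (y - a) / y = K * (1 - a / y)"
    using assms by (auto simp: field_simps)
  ultimately show ?thesis by simp
qed

lemma X12s_props:
  assumes fin: "lam1 mu1 m1 D r 1 \<noteq> \<infinity>" and apos: "X11s k1 D r S1in mu1 m1 > 0"
  shows "\<exists>!x. PX (X11s k1 D r S1in mu1 m1) x"
proof -
  define a where "a = X11s k1 D r S1in mu1 m1"
  obtain L where L: "lam1 mu1 m1 D r 1 = ereal L" "L > 0" "mu1 L = Dd D r 1"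
    using lam1_fin[OF fin] by auto
  have a: "a = (S1in - L) / k1" using L by (simp add: a_def X11s_def)
  have a0: "a > 0" using apos a_def by simp
  have aT: "a < S1in / k1" using a L k_pos by (simp add: divide_strict_right_mono)
  have cont: "continuous_on {0..S1in / k1} (\<lambda>x. mu1 (S1in - k1 * x))"
  proof (rule continuous_on_compose2[OF mu1_cont])
    show "continuous_on {0..S1in / k1} (\<lambda>x. S1in - k1 * x)" by (intro continuous_intros)
    show "(\<lambda>x. S1in - k1 * x) ` {0..S1in / k1} \<subseteq> {0..}" using k_pos by (auto simp: field_simps)
  qed
  have ex: "\<exists>x. PX a x"
  proof -
    obtain x where "0 < x" "x \<le> S1in / k1" "mu1 (S1in - k1 * x) = Dd D r 2 * (x - a) / x"
      using root_exists[OF cont _ a0 aT Dd_pos[of 2]] k_pos H1(1) by auto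
    then show ?thesis by blast
  qed
  have un: "x = y" if "PX a x" "PX a y" for x y
  proof (rule ccontr)
    assume "x \<noteq> y"
    then consider "x < y" | "y < x" by linarith
    then show False
    proof cases
      case 1
      have "mu1 (S1in - k1 * y) < mu1 (S1in - k1 * x)"
        using that 1 k_pos by (intro mu1_mono) (auto simp: field_simps)
      moreover have "Dd D r 2 * (x - a) / x < Dd D r 2 * (y - a) / y"
        using g_strict[OF a0 _ 1 Dd_pos] that by auto
      ultimately show False using that by auto
    next
      case 2
      have "mu1 (S1in - k1 * x) < mu1 (S1in - k1 * y)"
        using that 2 k_pos by (intro mu1_mono) (auto simp: field_simps)
      moreover have "Dd D r 2 * (y - a) / y < Dd D r 2 * (x - a) / x"
        using g_strict[OF a0 _ 2 Dd_pos] that by auto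
      ultimately show False using that by auto
    qed
  qed
  show ?thesis using ex un unfolding a_def by blast
qed

lemma X12s_is:
  assumes "lam1 mu1 m1 D r 1 \<noteq> \<infinity>" "X11s k1 D r S1in mu1 m1 > 0"
  shows "PX (X11s k1 D r S1in mu1 m1) (X12s k1 D r S1in mu1 m1)"
  using theI'[OF X12s_props[OF assms]] by (simp add: X12s_def)

lemma X12s_uniq:
  assumes "lam1 mu1 m1 D r 1 \<noteq> \<infinity>" "X11s k1 D r S1in mu1 m1 > 0"
     "PX (X11s k1 D r S1in mu1 m1) x"
  shows "X12s k1 D r S1in mu1 m1 = x"
  unfolding X12s_def by (rule the1_equality[OF X12s_props[OF assms(1,2)] assms(3)])

lemma PX_ge:
  assumes "PX a x" shows "a \<le> x"
proof -
  have "mu1 (S1in - k1 * x) \<ge> 0" using assms k_pos by (intro mu1_nonneg) (auto simp: field_simps)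
  then have "Dd D r 2 * (x - a) / x \<ge> 0" using assms by simp
  then show ?thesis using assms Dd_pos[of 2] by (auto simp: zero_le_divide_iff zero_le_mult_iff)
qed


lemma FF_eq:
  assumes "lam1 mu1 m1 D r i = ereal L1" "lam2 mu2 S2m D r i j = ereal L2"
  shows "FF k1 k2 D r S2in mu1 mu2 m1 S2m i j = ereal (L1 + k1 / k2 * (L2 - S2in))"
  using assms by (simp add: FF_def)

lemma FF_inf:
  assumes "lam1 mu1 m1 D r i \<noteq> \<infinity>" "lam2 mu2 S2m D r i j = \<infinity>"
  shows "FF k1 k2 D r S2in mu1 mu2 m1 S2m i j = \<infinity>"
proof -
  obtain L where "lam1 mu1 m1 D r i = ereal L" using assms(1) lam1_fin by blast
  then show ?thesis using assms k_pos by (simp add: FF_def)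
qed

lemma phi_eq:
  assumes "lam2 mu2 S2m D r 2 j = ereal L2"
  shows "phi k1 k2 D r S1in S2in mu1 mu2 m1 S2m j = ereal (S2in + k2 * X12s k1 D r S1in mu1 m1 - L2)"
  using assms by (simp add: phi_def)

lemma phi_inf:
  assumes "lam2 mu2 S2m D r 2 j = \<infinity>"
  shows "phi k1 k2 D r S1in S2in mu1 mu2 m1 S2m j = -\<infinity>"
  using assms by (simp add: phi_def)

lemma d_root:
  assumes "0 \<le> c" "0 < b" "b < (S2in + k2 * c) / k3"
  shows "\<exists>d. 0 < d \<and> d \<le> (S2in + k2 * c) / k3 \<and>
             mu2 (S2in + k2 * c - k3 * d) = Dd D r 2 * (d - b) / d"
proof -
  have cont: "continuous_on {0..(S2in + k2 * c) / k3} (\<lambda>x. mu2 (S2in + k2 * c - k3 * x))"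
  proof (rule continuous_on_compose2[OF mu2_cont])
    show "continuous_on {0..(S2in + k2 * c) / k3} (\<lambda>x. S2in + k2 * c - k3 * x)" by (intro continuous_intros)
    show "(\<lambda>x. S2in + k2 * c - k3 * x) ` {0..(S2in + k2 * c) / k3} \<subseteq> {0..}" using k_pos by (auto simp: field_simps)
  qed
  show ?thesis using root_exists[OF cont _ assms(2,3) Dd_pos[of 2]] k_pos H2(1) by auto
qed

lemma all_types_mem:
  "E00_00 \<in> all_types" "E00_10 \<in> all_types" "E10_10 \<in> all_types"
  "j \<in> {1,2} \<Longrightarrow> E00_0i j \<in> all_types" "j \<in> {1,2} \<Longrightarrow> E00_1i j \<in> all_types"
  "j \<in> {1,2} \<Longrightarrow> E10_1i j \<in> all_types" "j \<in> {1,2} \<Longrightarrow> E0i_01 j \<in> all_types"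
  "j \<in> {1,2} \<Longrightarrow> E0i_11 j \<in> all_types" "j \<in> {1,2} \<Longrightarrow> E1i_11 j \<in> all_types"
  by (auto simp: all_types_def)

lemma classify:
  assumes st: "steady k1 k2 k3 D r S1in S2in mu1 mu2 a b c d"
  shows "\<exists>t\<in>all_types. is_type k1 k2 k3 D r S1in S2in mu1 mu2 m1 S2m t a b c d"
proof -
  have M: "0 \<le> a" "0 \<le> b" "0 \<le> c" "0 \<le> d" "a \<le> S1in / k1" "c \<le> S1in / k1"
     "b \<le> (S2in + k2 * a) / k3" "d \<le> (S2in + k2 * c) / k3"
    using st by (auto simp: steady_def inM_def)
  have e1: "(mu1 (S1in - k1 * a) - Dd D r 1) * a = 0"
   and e2: "(mu2 (S2in + k2 * a - k3 * b) - Dd D r 1) * b = 0"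
   and e3: "Dd D r 2 * (a - c) + mu1 (S1in - k1 * c) * c = 0"
   and e4: "Dd D r 2 * (b - d) + mu2 (S2in + k2 * c - k3 * d) * d = 0"
    using st by (auto simp: steady_def)
  have arg: "0 \<le> S1in - k1 * a" "0 \<le> S1in - k1 * c" "0 \<le> S2in + k2 * a - k3 * b"
      "0 \<le> S2in + k2 * c - k3 * d"
    using M k_pos by (auto simp: field_simps)
  have D2: "Dd D r 2 > 0" by (rule Dd_pos)
  have bpos_d: "d > 0 \<and> mu2 (S2in + k2 * c - k3 * d) = Dd D r 2 * (d - b) / d" if "b > 0"
  proof -
    have "d \<noteq> 0" using e4 that D2 by auto
    then have "d > 0" using M by auto
    moreover have "mu2 (S2in + k2 * c - k3 * d) = Dd D r 2 * (d - b) / d"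
      using e4 \<open>d \<noteq> 0\<close> by (simp add: field_simps)
    ultimately show ?thesis by simp
  qed
  have bpos: "\<exists>j\<in>{1,2}. lam2 mu2 S2m D r 1 j = ereal (S2in + k2 * a - k3 * b)" if "b > 0"
    using e2 that arg(3) by (intro lam2_eq) auto
  have bzero_d: "d = 0 \<or> (d > 0 \<and> (\<exists>j\<in>{1,2}. lam2 mu2 S2m D r 2 j = ereal (S2in + k2 * c - k3 * d)))"
    if "b = 0"
  proof (cases "d = 0")
    case False
    then have "mu2 (S2in + k2 * c - k3 * d) = Dd D r 2" using e4 that by (simp add: algebra_simps)
    then show ?thesis using lam2_eq[OF arg(4)] False M by auto
  qed simp
  have azero_c: "c = 0 \<or> (c > 0 \<and> lam1 mu1 m1 D r 2 = ereal (S1in - k1 * c))" if "a = 0"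
  proof (cases "c = 0")
    case False
    then have "mu1 (S1in - k1 * c) = Dd D r 2" using e3 that by (simp add: algebra_simps)
    then show ?thesis using lam1_eq[OF arg(2)] False M by auto
  qed simp
  have apos: "lam1 mu1 m1 D r 1 = ereal (S1in - k1 * a) \<and> a = X11s k1 D r S1in mu1 m1
      \<and> c = X12s k1 D r S1in mu1 m1 \<and> c > 0" if "a > 0"
  proof -
    have l: "lam1 mu1 m1 D r 1 = ereal (S1in - k1 * a)"
      using e1 that by (intro lam1_eq[OF arg(1)]) auto
    have ax: "a = X11s k1 D r S1in mu1 m1" using l k_pos by (simp add: X11s_def)
    have "c \<noteq> 0" using e3 that D2 by auto
    then have "c > 0" using M by auto
    have "PX a c" using e3 \<open>c > 0\<close> M by (simp add: field_simps)
    then have "c = X12s k1 D r S1in mu1 m1" using X12s_uniq[of c] l ax that by simp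
    then show ?thesis using l ax \<open>c > 0\<close> by simp
  qed
  show ?thesis
  proof (cases "a = 0")
    case a0: True
    show ?thesis
    proof (cases "b = 0")
      case b0: True
      show ?thesis
      proof (cases "c = 0")
        case c0: True
        show ?thesis
        proof (cases "d = 0")
          case True
          then show ?thesis using a0 b0 c0 all_types_mem by force
        next
          case False
          then obtain j where j: "j \<in> {1,2}" "lam2 mu2 S2m D r 2 j = ereal (S2in - k3 * d)" "d > 0"
            using bzero_d[OF b0] c0 by auto
          have "is_type k1 k2 k3 D r S1in S2in mu1 mu2 m1 S2m (E00_0i j) a b c d"
            using j a0 b0 c0 k_pos by simp
          then show ?thesis using all_types_mem(4)[OF j(1)] by blast
        qed
      next
        case c1: False
        then have c: "c > 0" "lam1 mu1 m1 D r 2 = ereal (S1in - k1 * c)" using azero_c[OF a0] by auto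
        show ?thesis
        proof (cases "d = 0")
          case True
          have "is_type k1 k2 k3 D r S1in S2in mu1 mu2 m1 S2m E00_10 a b c d"
            using True a0 b0 c k_pos by simp
          then show ?thesis using all_types_mem by blast
        next
          case False
          then obtain j where j: "j \<in> {1,2}" "lam2 mu2 S2m D r 2 j = ereal (S2in + k2 * c - k3 * d)" "d > 0"
            using bzero_d[OF b0] by auto
          have F: "FF k1 k2 D r S2in mu1 mu2 m1 S2m 2 j =
             ereal (S1in - k1 * c + k1 / k2 * (S2in + k2 * c - k3 * d - S2in))"
            by (rule FF_eq[OF c(2) j(2)])
          have "is_type k1 k2 k3 D r S1in S2in mu1 mu2 m1 S2m (E00_1i j) a b c d"
            using j a0 b0 c k_pos F by (simp add: field_simps)
          then show ?thesis using all_types_mem(5)[OF j(1)] by blast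
        qed
      qed
    next
      case b1: False
      then have "b > 0" using M by simp
      then obtain j where j: "j \<in> {1,2}" "lam2 mu2 S2m D r 1 j = ereal (S2in + k2 * a - k3 * b)"
        using bpos by auto
      have d: "d > 0" "mu2 (S2in + k2 * c - k3 * d) = Dd D r 2 * (d - b) / d"
        using bpos_d[OF \<open>b > 0\<close>] by auto
      show ?thesis
      proof (cases "c = 0")
        case True
        have "is_type k1 k2 k3 D r S1in S2in mu1 mu2 m1 S2m (E0i_01 j) a b c d"
          using True a0 \<open>b > 0\<close> d j M k_pos by simp
        then show ?thesis using all_types_mem(7)[OF j(1)] by blast
      next
        case False
        then have c: "c > 0" "lam1 mu1 m1 D r 2 = ereal (S1in - k1 * c)" using azero_c[OF a0] by auto
        have "is_type k1 k2 k3 D r S1in S2in mu1 mu2 m1 S2m (E0i_11 j) a b c d"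
          using c a0 \<open>b > 0\<close> d j M k_pos by simp
        then show ?thesis using all_types_mem(8)[OF j(1)] by blast
      qed
    qed
  next
    case a1: False
    then have "a > 0" using M by simp
    note A = apos[OF this]
    have fin: "lam1 mu1 m1 D r 1 \<noteq> \<infinity>" using A by simp
    show ?thesis
    proof (cases "b = 0")
      case b0: True
      show ?thesis
      proof (cases "d = 0")
        case True
        have "is_type k1 k2 k3 D r S1in S2in mu1 mu2 m1 S2m E10_10 a b c d"
          using True b0 A \<open>a > 0\<close> by simp
        then show ?thesis using all_types_mem by blast
      next
        case False
        then obtain j where j: "j \<in> {1,2}" "lam2 mu2 S2m D r 2 j = ereal (S2in + k2 * c - k3 * d)" "d > 0"
          using bzero_d[OF b0] by auto
        have P: "phi k1 k2 D r S1in S2in mu1 mu2 m1 S2m j = ereal (k3 * d)"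
          using phi_eq[OF j(2)] A by simp
        have "is_type k1 k2 k3 D r S1in S2in mu1 mu2 m1 S2m (E10_1i j) a b c d"
          using j b0 A \<open>a > 0\<close> P k_pos by simp
        then show ?thesis using all_types_mem(6)[OF j(1)] by blast
      qed
    next
      case b1: False
      then have "b > 0" using M by simp
      then obtain j where j: "j \<in> {1,2}" "lam2 mu2 S2m D r 1 j = ereal (S2in + k2 * a - k3 * b)"
        using bpos by auto
      have d: "d > 0" "mu2 (S2in + k2 * c - k3 * d) = Dd D r 2 * (d - b) / d"
        using bpos_d[OF \<open>b > 0\<close>] by auto
      have F: "FF k1 k2 D r S2in mu1 mu2 m1 S2m 1 j =
             ereal (S1in - k1 * a + k1 / k2 * (S2in + k2 * a - k3 * b - S2in))"
        using FF_eq A j(2) by blast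
      have "is_type k1 k2 k3 D r S1in S2in mu1 mu2 m1 S2m (E1i_11 j) a b c d"
        using A \<open>a > 0\<close> \<open>b > 0\<close> d j M k_pos F by (simp add: field_simps)
      then show ?thesis using all_types_mem(9)[OF j(1)] by blast
    qed
  qed
qed


abbreviation ST where "ST a b c d \<equiv> steady k1 k2 k3 D r S1in S2in mu1 mu2 a b c d"
abbreviation IT where "IT t a b c d \<equiv> is_type k1 k2 k3 D r S1in S2in mu1 mu2 m1 S2m t a b c d"
abbreviation EC where "EC t \<equiv> exists_cond k1 k2 k3 D r S1in S2in mu1 mu2 m1 S2m t"

lemma T00_00: "(\<exists>a b c d. ST a b c d \<and> IT E00_00 a b c d) \<longleftrightarrow> EC E00_00"
proof -
  have "ST 0 0 0 0" using k_pos Sin_nonneg H1(1) H2(1) by (simp add: steady_def inM_def)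
  then show ?thesis by auto
qed

lemma T00_0i: "(\<exists>a b c d. ST a b c d \<and> IT (E00_0i i) a b c d) \<longleftrightarrow> EC (E00_0i i)"
proof
  assume "\<exists>a b c d. ST a b c d \<and> IT (E00_0i i) a b c d"
  then obtain d where d: "d > 0" "lam2 mu2 S2m D r 2 i \<noteq> \<infinity>"
    "d = (S2in - real_of_ereal (lam2 mu2 S2m D r 2 i)) / k3" by auto
  obtain L where L: "lam2 mu2 S2m D r 2 i = ereal L" using lam2_fin[OF d(2)] by auto
  have "S2in > L" using d L k_pos by (simp add: field_simps)
  then show "EC (E00_0i i)" using L by simp
next
  assume "EC (E00_0i i)"
  then have lt: "ereal S2in > lam2 mu2 S2m D r 2 i" by simp
  then have "lam2 mu2 S2m D r 2 i \<noteq> \<infinity>" by auto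
  then obtain L where L: "lam2 mu2 S2m D r 2 i = ereal L" "L > 0" "mu2 L = Dd D r 2"
    using lam2_fin by blast
  define d where "d = (S2in - L) / k3"
  have "S2in > L" using lt L by simp
  then have d0: "d > 0" using k_pos by (simp add: d_def)
  have arg: "S2in - k3 * d = L" using k_pos by (simp add: d_def)
  have "ST 0 0 0 d"
    unfolding steady_def inM_def using d0 arg L k_pos Sin_nonneg H1(1) H2(1)
    by (auto simp: d_def field_simps)
  moreover have "IT (E00_0i i) 0 0 0 d" using d0 L by (simp add: d_def)
  ultimately show "\<exists>a b c d. ST a b c d \<and> IT (E00_0i i) a b c d" by blast
qed

lemma T00_10: "(\<exists>a b c d. ST a b c d \<and> IT E00_10 a b c d) \<longleftrightarrow> EC E00_10"
proof
  assume "\<exists>a b c d. ST a b c d \<and> IT E00_10 a b c d"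
  then obtain c where c: "c > 0" "lam1 mu1 m1 D r 2 \<noteq> \<infinity>"
    "c = (S1in - real_of_ereal (lam1 mu1 m1 D r 2)) / k1" by auto
  obtain L where L: "lam1 mu1 m1 D r 2 = ereal L" using lam1_fin[OF c(2)] by auto
  have "S1in > L" using c L k_pos by (simp add: field_simps)
  then show "EC E00_10" using L by simp
next
  assume "EC E00_10"
  then have lt: "ereal S1in > lam1 mu1 m1 D r 2" by simp
  then have "lam1 mu1 m1 D r 2 \<noteq> \<infinity>" by auto
  then obtain L where L: "lam1 mu1 m1 D r 2 = ereal L" "L > 0" "mu1 L = Dd D r 2"
    using lam1_fin by blast
  define c where "c = (S1in - L) / k1"
  have "S1in > L" using lt L by simp
  then have c0: "c > 0" using k_pos by (simp add: c_def)
  have arg: "S1in - k1 * c = L" using k_pos by (simp add: c_def)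
  have cle: "c \<le> S1in / k1" using L k_pos by (simp add: c_def divide_right_mono)
  have "0 \<le> (S2in + k2 * c) / k3" using c0 k_pos Sin_nonneg by simp
  then have "ST 0 0 c 0"
    unfolding steady_def inM_def using c0 cle arg L k_pos Sin_nonneg H1(1) H2(1)
    by auto
  moreover have "IT E00_10 0 0 c 0" using c0 L by (simp add: c_def)
  ultimately show "\<exists>a b c d. ST a b c d \<and> IT E00_10 a b c d" by blast
qed


lemma T00_1i: "(\<exists>a b c d. ST a b c d \<and> IT (E00_1i i) a b c d) \<longleftrightarrow> EC (E00_1i i)"
proof
  assume "\<exists>a b c d. ST a b c d \<and> IT (E00_1i i) a b c d"
  then obtain c d where cd: "c > 0" "d > 0" "lam1 mu1 m1 D r 2 \<noteq> \<infinity>"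
    "FF k1 k2 D r S2in mu1 mu2 m1 S2m 2 i \<noteq> \<infinity>"
    "c = (S1in - real_of_ereal (lam1 mu1 m1 D r 2)) / k1"
    "d = k2 * (S1in - real_of_ereal (FF k1 k2 D r S2in mu1 mu2 m1 S2m 2 i)) / (k1 * k3)" by auto
  obtain L1 where L1: "lam1 mu1 m1 D r 2 = ereal L1" using lam1_fin[OF cd(3)] by auto
  have "lam2 mu2 S2m D r 2 i \<noteq> \<infinity>" using FF_inf[OF cd(3)] cd(4) by auto
  then obtain L2 where L2: "lam2 mu2 S2m D r 2 i = ereal L2" using lam2_fin by blast
  define F where "F = L1 + k1 / k2 * (L2 - S2in)"
  have FF: "FF k1 k2 D r S2in mu1 mu2 m1 S2m 2 i = ereal F" using FF_eq[OF L1 L2] by (simp add: F_def)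
  have "S1in > L1" using cd L1 k_pos by (simp add: field_simps)
  moreover have "S1in - F > 0"
    using cd(2) cd(6) FF k_pos mult_pos_pos[OF k_pos(1) k_pos(3)] by (auto simp: zero_less_divide_iff zero_less_mult_iff)
  ultimately show "EC (E00_1i i)" using L1 FF by simp
next
  assume "EC (E00_1i i)"
  then have lt: "ereal S1in > lam1 mu1 m1 D r 2" "ereal S1in > FF k1 k2 D r S2in mu1 mu2 m1 S2m 2 i" by auto
  then have f1: "lam1 mu1 m1 D r 2 \<noteq> \<infinity>" by auto
  then obtain L1 where L1: "lam1 mu1 m1 D r 2 = ereal L1" "L1 > 0" "mu1 L1 = Dd D r 2"
    using lam1_fin by blast
  have "lam2 mu2 S2m D r 2 i \<noteq> \<infinity>" using FF_inf[OF f1] lt(2) by auto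
  then obtain L2 where L2: "lam2 mu2 S2m D r 2 i = ereal L2" "L2 > 0" "mu2 L2 = Dd D r 2"
    using lam2_fin by blast
  define F where "F = L1 + k1 / k2 * (L2 - S2in)"
  have FF: "FF k1 k2 D r S2in mu1 mu2 m1 S2m 2 i = ereal F" using FF_eq[OF L1(1) L2(1)] by (simp add: F_def)
  have SF: "S1in > F" "S1in > L1" using lt FF L1 by auto
  define c where "c = (S1in - L1) / k1"
  define d where "d = (S2in + k2 * c - L2) / k3"
  have iden: "S2in + k2 * c - L2 = k2 / k1 * (S1in - F)"
    using k_pos by (simp add: c_def F_def field_simps)
  have c0: "c > 0" using SF k_pos by (simp add: c_def)
  have d0: "d > 0" unfolding d_def iden using SF k_pos by simp
  have arg1: "S1in - k1 * c = L1" using k_pos by (simp add: c_def)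
  have arg4: "S2in + k2 * c - k3 * d = L2" using k_pos by (simp add: d_def)
  have cle: "c \<le> S1in / k1" using L1 k_pos by (simp add: c_def divide_right_mono)
  have dle: "d \<le> (S2in + k2 * c) / k3" using L2 k_pos by (simp add: d_def divide_right_mono)
  have "ST 0 0 c d"
    unfolding steady_def inM_def using c0 d0 cle dle arg1 arg4 L1 L2 k_pos Sin_nonneg H1(1) H2(1)
    by auto
  moreover have "d = k2 * (S1in - F) / (k1 * k3)" unfolding d_def iden by simp
  then have "IT (E00_1i i) 0 0 c d" using c0 d0 L1 FF by (simp add: c_def)
  ultimately show "\<exists>a b c d. ST a b c d \<and> IT (E00_1i i) a b c d" by blast
qed

lemma apart:
  assumes "ereal S1in > lam1 mu1 m1 D r 1"
  obtains L where "lam1 mu1 m1 D r 1 = ereal L" "L > 0" "mu1 L = Dd D r 1"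
    "X11s k1 D r S1in mu1 m1 > 0" "X11s k1 D r S1in mu1 m1 \<le> S1in / k1"
    "S1in - k1 * X11s k1 D r S1in mu1 m1 = L"
    "PX (X11s k1 D r S1in mu1 m1) (X12s k1 D r S1in mu1 m1)"
    "X11s k1 D r S1in mu1 m1 \<le> X12s k1 D r S1in mu1 m1"
proof -
  have f: "lam1 mu1 m1 D r 1 \<noteq> \<infinity>" using assms by auto
  then obtain L where L: "lam1 mu1 m1 D r 1 = ereal L" "L > 0" "mu1 L = Dd D r 1"
    using lam1_fin by blast
  have X: "X11s k1 D r S1in mu1 m1 = (S1in - L) / k1" using L by (simp add: X11s_def)
  have "S1in > L" using assms L by simp
  then have a0: "X11s k1 D r S1in mu1 m1 > 0" using X k_pos by simp
  have "X11s k1 D r S1in mu1 m1 \<le> S1in / k1" using X L k_pos by (simp add: divide_right_mono)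
  moreover have "S1in - k1 * X11s k1 D r S1in mu1 m1 = L" using X k_pos by simp
  moreover have P: "PX (X11s k1 D r S1in mu1 m1) (X12s k1 D r S1in mu1 m1)" using X12s_is[OF f a0] .
  moreover have "X11s k1 D r S1in mu1 m1 \<le> X12s k1 D r S1in mu1 m1" using PX_ge[OF P] .
  ultimately show ?thesis using that L a0 by blast
qed

lemma T10_10: "(\<exists>a b c d. ST a b c d \<and> IT E10_10 a b c d) \<longleftrightarrow> EC E10_10"
proof
  assume "\<exists>a b c d. ST a b c d \<and> IT E10_10 a b c d"
  then obtain a where a: "a > 0" "lam1 mu1 m1 D r 1 \<noteq> \<infinity>" "a = X11s k1 D r S1in mu1 m1" by auto
  obtain L where L: "lam1 mu1 m1 D r 1 = ereal L" using lam1_fin[OF a(2)] by auto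
  have "S1in > L" using a L k_pos by (simp add: X11s_def field_simps)
  then show "EC E10_10" using L by simp
next
  assume "EC E10_10"
  then have lt: "ereal S1in > lam1 mu1 m1 D r 1" by simp
  obtain L where L: "lam1 mu1 m1 D r 1 = ereal L" "L > 0" "mu1 L = Dd D r 1"
    "X11s k1 D r S1in mu1 m1 > 0" "X11s k1 D r S1in mu1 m1 \<le> S1in / k1"
    "S1in - k1 * X11s k1 D r S1in mu1 m1 = L"
    "PX (X11s k1 D r S1in mu1 m1) (X12s k1 D r S1in mu1 m1)"
    "X11s k1 D r S1in mu1 m1 \<le> X12s k1 D r S1in mu1 m1"
    using apart[OF lt] by blast
  define a where "a = X11s k1 D r S1in mu1 m1"
  define c where "c = X12s k1 D r S1in mu1 m1"
  have e3: "Dd D r 2 * (a - c) + mu1 (S1in - k1 * c) * c = 0"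
    using L(7) unfolding a_def[symmetric] c_def[symmetric] by (simp add: field_simps)
  have "ST a 0 c 0"
    unfolding steady_def inM_def using L e3 k_pos Sin_nonneg H1(1) H2(1)
    unfolding a_def[symmetric] c_def[symmetric] by (auto intro: add_nonneg_nonneg)
  moreover have "IT E10_10 a 0 c 0" using L unfolding a_def[symmetric] c_def[symmetric] by (simp add: a_def c_def)
  ultimately show "\<exists>a b c d. ST a b c d \<and> IT E10_10 a b c d" by blast
qed


lemma T10_1i: "(\<exists>a b c d. ST a b c d \<and> IT (E10_1i i) a b c d) \<longleftrightarrow> EC (E10_1i i)"
proof
  assume "\<exists>a b c d. ST a b c d \<and> IT (E10_1i i) a b c d"
  then obtain a d where a: "a > 0" "lam1 mu1 m1 D r 1 \<noteq> \<infinity>" "a = X11s k1 D r S1in mu1 m1"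
    "d > 0" "lam2 mu2 S2m D r 2 i \<noteq> \<infinity>" "d = real_of_ereal (phi k1 k2 D r S1in S2in mu1 mu2 m1 S2m i) / k3"
    by auto
  obtain L where L: "lam1 mu1 m1 D r 1 = ereal L" using lam1_fin[OF a(2)] by auto
  have "S1in > L" using a L k_pos by (simp add: X11s_def field_simps)
  moreover obtain L2 where L2: "lam2 mu2 S2m D r 2 i = ereal L2" using lam2_fin[OF a(5)] by auto
  note P = phi_eq[OF L2]
  have "S2in + k2 * X12s k1 D r S1in mu1 m1 - L2 > 0" using a(4,6) P k_pos by (simp add: zero_less_divide_iff)
  ultimately show "EC (E10_1i i)" using L P by simp
next
  assume "EC (E10_1i i)"
  then have lt: "ereal S1in > lam1 mu1 m1 D r 1" and ph: "phi k1 k2 D r S1in S2in mu1 mu2 m1 S2m i > 0" by auto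
  obtain L where L: "lam1 mu1 m1 D r 1 = ereal L" "L > 0" "mu1 L = Dd D r 1"
    "X11s k1 D r S1in mu1 m1 > 0" "X11s k1 D r S1in mu1 m1 \<le> S1in / k1"
    "S1in - k1 * X11s k1 D r S1in mu1 m1 = L"
    "PX (X11s k1 D r S1in mu1 m1) (X12s k1 D r S1in mu1 m1)"
    "X11s k1 D r S1in mu1 m1 \<le> X12s k1 D r S1in mu1 m1"
    using apart[OF lt] by blast
  have "lam2 mu2 S2m D r 2 i \<noteq> \<infinity>" using phi_inf[of i] ph by auto
  then obtain L2 where L2: "lam2 mu2 S2m D r 2 i = ereal L2" "L2 > 0" "mu2 L2 = Dd D r 2"
    using lam2_fin by blast
  note P = phi_eq[OF L2(1)]
  define a where "a = X11s k1 D r S1in mu1 m1"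
  define c where "c = X12s k1 D r S1in mu1 m1"
  define d where "d = (S2in + k2 * c - L2) / k3"
  have d0: "d > 0" using ph P k_pos by (simp add: d_def c_def)
  have arg4: "S2in + k2 * c - k3 * d = L2" using k_pos by (simp add: d_def)
  have dle: "d \<le> (S2in + k2 * c) / k3" using L2 k_pos by (simp add: d_def divide_right_mono)
  have e3: "Dd D r 2 * (a - c) + mu1 (S1in - k1 * c) * c = 0"
    using L(7) unfolding a_def[symmetric] c_def[symmetric] by (simp add: field_simps)
  have "ST a 0 c d"
    unfolding steady_def inM_def using L e3 d0 dle arg4 L2 k_pos Sin_nonneg H1(1) H2(1)
    unfolding a_def[symmetric] c_def[symmetric] by (auto intro: add_nonneg_nonneg)
  moreover have "IT (E10_1i i) a 0 c d" using L d0 L2 P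
    unfolding a_def[symmetric] c_def[symmetric] by (simp add: a_def c_def d_def)
  ultimately show "\<exists>a b c d. ST a b c d \<and> IT (E10_1i i) a b c d" by blast
qed

lemma T0i_01: "(\<exists>a b c d. ST a b c d \<and> IT (E0i_01 i) a b c d) \<longleftrightarrow> EC (E0i_01 i)"
proof
  assume "\<exists>a b c d. ST a b c d \<and> IT (E0i_01 i) a b c d"
  then obtain b where b: "b > 0" "lam2 mu2 S2m D r 1 i \<noteq> \<infinity>"
    "b = (S2in - real_of_ereal (lam2 mu2 S2m D r 1 i)) / k3" by auto
  obtain L where L: "lam2 mu2 S2m D r 1 i = ereal L" using lam2_fin[OF b(2)] by auto
  have "S2in > L" using b L k_pos by (simp add: field_simps)
  then show "EC (E0i_01 i)" using L by simp
next
  assume "EC (E0i_01 i)"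
  then have lt: "ereal S2in > lam2 mu2 S2m D r 1 i" by simp
  then have "lam2 mu2 S2m D r 1 i \<noteq> \<infinity>" by auto
  then obtain L where L: "lam2 mu2 S2m D r 1 i = ereal L" "L > 0" "mu2 L = Dd D r 1"
    using lam2_fin by blast
  define b where "b = (S2in - L) / k3"
  have "S2in > L" using lt L by simp
  then have b0: "b > 0" using k_pos by (simp add: b_def)
  have arg2: "S2in - k3 * b = L" using k_pos by (simp add: b_def)
  have blt: "b < (S2in + k2 * 0) / k3" using L k_pos by (simp add: b_def divide_strict_right_mono)
  obtain d where d: "0 < d" "d \<le> (S2in + k2 * 0) / k3"
       "mu2 (S2in + k2 * 0 - k3 * d) = Dd D r 2 * (d - b) / d"
    using d_root[OF _ b0 blt] by auto
  have e4: "Dd D r 2 * (b - d) + mu2 (S2in + k2 * 0 - k3 * d) * d = 0"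
    using d by (simp add: field_simps)
  have "ST 0 b 0 d"
    unfolding steady_def inM_def using b0 blt d e4 arg2 L k_pos Sin_nonneg H1(1) H2(1)
    by auto
  moreover have "IT (E0i_01 i) 0 b 0 d" using b0 L d by (simp add: b_def)
  ultimately show "\<exists>a b c d. ST a b c d \<and> IT (E0i_01 i) a b c d" by blast
qed

lemma T0i_11: "(\<exists>a b c d. ST a b c d \<and> IT (E0i_11 i) a b c d) \<longleftrightarrow> EC (E0i_11 i)"
proof
  assume "\<exists>a b c d. ST a b c d \<and> IT (E0i_11 i) a b c d"
  then obtain b c where b: "b > 0" "lam2 mu2 S2m D r 1 i \<noteq> \<infinity>"
    "b = (S2in - real_of_ereal (lam2 mu2 S2m D r 1 i)) / k3"
    "c > 0" "lam1 mu1 m1 D r 2 \<noteq> \<infinity>" "c = (S1in - real_of_ereal (lam1 mu1 m1 D r 2)) / k1" by auto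
  obtain L where L: "lam2 mu2 S2m D r 1 i = ereal L" using lam2_fin[OF b(2)] by auto
  obtain L1 where L1: "lam1 mu1 m1 D r 2 = ereal L1" using lam1_fin[OF b(5)] by auto
  have "S2in > L" using b L k_pos by (simp add: field_simps)
  moreover have "S1in > L1" using b L1 k_pos by (simp add: field_simps)
  ultimately show "EC (E0i_11 i)" using L L1 by simp
next
  assume "EC (E0i_11 i)"
  then have lt: "ereal S2in > lam2 mu2 S2m D r 1 i" "ereal S1in > lam1 mu1 m1 D r 2" by auto
  then have "lam2 mu2 S2m D r 1 i \<noteq> \<infinity>" by auto
  then obtain L where L: "lam2 mu2 S2m D r 1 i = ereal L" "L > 0" "mu2 L = Dd D r 1"
    using lam2_fin by blast
  have "lam1 mu1 m1 D r 2 \<noteq> \<infinity>" using lt by auto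
  then obtain L1 where L1: "lam1 mu1 m1 D r 2 = ereal L1" "L1 > 0" "mu1 L1 = Dd D r 2"
    using lam1_fin by blast
  define b where "b = (S2in - L) / k3"
  define c where "c = (S1in - L1) / k1"
  have "S2in > L" using lt L by simp
  then have b0: "b > 0" using k_pos by (simp add: b_def)
  have "S1in > L1" using lt L1 by simp
  then have c0: "c > 0" using k_pos by (simp add: c_def)
  have arg1: "S1in - k1 * c = L1" using k_pos by (simp add: c_def)
  have cle: "c \<le> S1in / k1" using L1 k_pos by (simp add: c_def divide_right_mono)
  have arg2: "S2in - k3 * b = L" using k_pos by (simp add: b_def)
  have "b < S2in / k3" using L k_pos by (simp add: b_def divide_strict_right_mono)
  also have "S2in / k3 \<le> (S2in + k2 * c) / k3" using c0 k_pos by (simp add: divide_right_mono)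
  finally have blt: "b < (S2in + k2 * c) / k3" .
  obtain d where d: "0 < d" "d \<le> (S2in + k2 * c) / k3"
       "mu2 (S2in + k2 * c - k3 * d) = Dd D r 2 * (d - b) / d"
    using d_root[OF _ b0 blt] c0 by auto
  have e4: "Dd D r 2 * (b - d) + mu2 (S2in + k2 * c - k3 * d) * d = 0"
    using d by (simp add: field_simps)
  have "b \<le> (S2in + k2 * 0) / k3" using blt \<open>b < S2in / k3\<close> by simp
  then have "ST 0 b c d"
    unfolding steady_def inM_def using b0 c0 cle arg1 d e4 arg2 L L1 k_pos Sin_nonneg H1(1) H2(1)
    by auto
  moreover have "IT (E0i_11 i) 0 b c d" using b0 c0 L L1 d by (simp add: b_def c_def)
  ultimately show "\<exists>a b c d. ST a b c d \<and> IT (E0i_11 i) a b c d" by blast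
qed

lemma T1i_11: "(\<exists>a b c d. ST a b c d \<and> IT (E1i_11 i) a b c d) \<longleftrightarrow> EC (E1i_11 i)"
proof
  assume "\<exists>a b c d. ST a b c d \<and> IT (E1i_11 i) a b c d"
  then obtain a b where ab: "a > 0" "b > 0" "lam1 mu1 m1 D r 1 \<noteq> \<infinity>"
    "FF k1 k2 D r S2in mu1 mu2 m1 S2m 1 i \<noteq> \<infinity>"
    "a = X11s k1 D r S1in mu1 m1"
    "b = k2 * (S1in - real_of_ereal (FF k1 k2 D r S2in mu1 mu2 m1 S2m 1 i)) / (k1 * k3)" by auto
  obtain L1 where L1: "lam1 mu1 m1 D r 1 = ereal L1" using lam1_fin[OF ab(3)] by auto
  have "lam2 mu2 S2m D r 1 i \<noteq> \<infinity>" using FF_inf[OF ab(3)] ab(4) by auto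
  then obtain L2 where L2: "lam2 mu2 S2m D r 1 i = ereal L2" using lam2_fin by blast
  define F where "F = L1 + k1 / k2 * (L2 - S2in)"
  have FF: "FF k1 k2 D r S2in mu1 mu2 m1 S2m 1 i = ereal F" using FF_eq[OF L1 L2] by (simp add: F_def)
  have "S1in > L1" using ab L1 k_pos by (simp add: X11s_def field_simps)
  moreover have "S1in - F > 0"
    using ab(2) ab(6) FF k_pos mult_pos_pos[OF k_pos(1) k_pos(3)] by (auto simp: zero_less_divide_iff zero_less_mult_iff)
  ultimately show "EC (E1i_11 i)" using L1 FF by simp
next
  assume "EC (E1i_11 i)"
  then have lt: "ereal S1in > lam1 mu1 m1 D r 1" "ereal S1in > FF k1 k2 D r S2in mu1 mu2 m1 S2m 1 i" by auto
  then have f1: "lam1 mu1 m1 D r 1 \<noteq> \<infinity>" by auto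
  obtain L1 where L1: "lam1 mu1 m1 D r 1 = ereal L1" "L1 > 0" "mu1 L1 = Dd D r 1"
    "X11s k1 D r S1in mu1 m1 > 0" "X11s k1 D r S1in mu1 m1 \<le> S1in / k1"
    "S1in - k1 * X11s k1 D r S1in mu1 m1 = L1"
    "PX (X11s k1 D r S1in mu1 m1) (X12s k1 D r S1in mu1 m1)"
    "X11s k1 D r S1in mu1 m1 \<le> X12s k1 D r S1in mu1 m1"
    using apart[OF lt(1)] by blast
  have "lam2 mu2 S2m D r 1 i \<noteq> \<infinity>" using FF_inf[OF f1] lt(2) by auto
  then obtain L2 where L2: "lam2 mu2 S2m D r 1 i = ereal L2" "L2 > 0" "mu2 L2 = Dd D r 1"
    using lam2_fin by blast
  define F where "F = L1 + k1 / k2 * (L2 - S2in)"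
  have FF: "FF k1 k2 D r S2in mu1 mu2 m1 S2m 1 i = ereal F" using FF_eq[OF L1(1) L2(1)] by (simp add: F_def)
  have SF: "S1in > F" using lt FF by auto
  define a where "a = X11s k1 D r S1in mu1 m1"
  define c where "c = X12s k1 D r S1in mu1 m1"
  define b where "b = (S2in + k2 * a - L2) / k3"
  have aL: "a = (S1in - L1) / k1" using L1(6) k_pos by (simp add: a_def field_simps)
  have iden: "S2in + k2 * a - L2 = k2 / k1 * (S1in - F)"
    using k_pos by (simp add: aL F_def field_simps)
  have b0: "b > 0" unfolding b_def iden using SF k_pos by simp
  have arg2: "S2in + k2 * a - k3 * b = L2" using k_pos by (simp add: b_def)
  have ble: "b \<le> (S2in + k2 * a) / k3" using L2 k_pos by (simp add: b_def divide_right_mono)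
  have ac: "a \<le> c" using L1(8) by (simp add: a_def c_def)
  have c0: "c > 0" using L1(7) by (simp add: c_def)
  have "b < (S2in + k2 * a) / k3" using L2 k_pos by (simp add: b_def divide_strict_right_mono)
  also have "(S2in + k2 * a) / k3 \<le> (S2in + k2 * c) / k3" using ac k_pos by (simp add: divide_right_mono)
  finally have blt: "b < (S2in + k2 * c) / k3" .
  obtain d where d: "0 < d" "d \<le> (S2in + k2 * c) / k3"
       "mu2 (S2in + k2 * c - k3 * d) = Dd D r 2 * (d - b) / d"
    using d_root[OF _ b0 blt] c0 by auto
  have e4: "Dd D r 2 * (b - d) + mu2 (S2in + k2 * c - k3 * d) * d = 0"
    using d by (simp add: field_simps)
  have e3: "Dd D r 2 * (a - c) + mu1 (S1in - k1 * c) * c = 0"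
    using L1(7) unfolding a_def[symmetric] c_def[symmetric] by (simp add: field_simps)
  have "ST a b c d"
    unfolding steady_def inM_def using L1 e3 e4 d b0 ble arg2 L2 k_pos Sin_nonneg H1(1) H2(1)
    unfolding a_def[symmetric] c_def[symmetric] by (auto intro: add_nonneg_nonneg)
  moreover have "b = k2 * (S1in - F) / (k1 * k3)" unfolding b_def iden by simp
  then have "IT (E1i_11 i) a b c d" using L1 b0 d FF
    unfolding a_def[symmetric] c_def[symmetric] by (simp add: a_def c_def)
  ultimately show "\<exists>a b c d. ST a b c d \<and> IT (E1i_11 i) a b c d" by blast
qed


lemma main:
  "(\<forall>a b c d. ST a b c d \<longrightarrow> (\<exists>t\<in>all_types. IT t a b c d))
   \<and> (\<forall>t\<in>all_types. (\<exists>a b c d. ST a b c d \<and> IT t a b c d) \<longleftrightarrow> EC t)"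
proof (intro conjI allI impI ballI)
  fix a b c d assume "ST a b c d" then show "\<exists>t\<in>all_types. IT t a b c d" by (rule classify)
next
  fix t assume "t \<in> all_types"
  then show "(\<exists>a b c d. ST a b c d \<and> IT t a b c d) \<longleftrightarrow> EC t"
    by (cases t) (simp_all only: T00_00 T00_0i T00_10 T00_1i T10_10 T10_1i T0i_01 T0i_11 T1i_11)
qed

end
theorem proposition3p1:
  fixes k1 k2 k3 D r S1in S2in m1 S2m :: real
    and mu1 mu2 mu1' mu2' :: "real \<Rightarrow> real"
  assumes k_pos: "k1 > 0" "k2 > 0" "k3 > 0"
    and D_pos: "D > 0"
    and r_range: "0 < r" "r < 1"
    and Sin_nonneg: "S1in \<ge> 0" "S2in \<ge> 0"
    and mu1_C1: "\<And>s. s \<ge> 0 \<Longrightarrow> (mu1 has_real_derivative mu1' s) (at s within {0..})"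
                "continuous_on {0..} mu1'"
    and mu2_C1: "\<And>s. s \<ge> 0 \<Longrightarrow> (mu2 has_real_derivative mu2' s) (at s within {0..})"
                "continuous_on {0..} mu2'"
    and H1: "mu1 0 = 0" "(mu1 \<longlongrightarrow> m1) at_top" "\<And>s. s > 0 \<Longrightarrow> mu1' s > 0"
    and H2: "mu2 0 = 0" "(mu2 \<longlongrightarrow> 0) at_top" "S2m > 0"
            "\<And>s. 0 < s \<Longrightarrow> s < S2m \<Longrightarrow> mu2' s > 0"
            "\<And>s. S2m < s \<Longrightarrow> mu2' s < 0"
  shows "(\<forall>a b c d. steady k1 k2 k3 D r S1in S2in mu1 mu2 a b c d \<longrightarrow>
            (\<exists>t\<in>all_types. is_type k1 k2 k3 D r S1in S2in mu1 mu2 m1 S2m t a b c d))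
       \<and> (\<forall>t\<in>all_types.
            (\<exists>a b c d. steady k1 k2 k3 D r S1in S2in mu1 mu2 a b c d \<and>
                       is_type k1 k2 k3 D r S1in S2in mu1 mu2 m1 S2m t a b c d)
            \<longleftrightarrow> exists_cond k1 k2 k3 D r S1in S2in mu1 mu2 m1 S2m t)"
proof -
  interpret chemo k1 k2 k3 D r S1in S2in m1 S2m mu1 mu2 mu1' mu2'
    by (unfold_locales; fact assms)
  show ?thesis by (rule main)
qed

end
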